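(* Let $q$ be a prime power, let $p\ge2$ be an integer, and let $Z$ be a random vector in $\mathbb{F}_q^n$ with distribution $P_Z$. For $0\le d\le p$ define $$g(d)=\frac{1}{q^n}\sum_{x\in\mathbb{F}_q^n}\ \sum_{\substack{(v_1,\dots,v_p)\in(\mathbb{F}_q^n)^p\\ \mathrm{rank}[v_1,\dots,v_p]=d}}\ \prod_{l=1}^pP_Z(x-v_l).$$ Then for every $0\le d\le p$, $$g(d)\le\binom{p}{d}q^{(p-d)(d-H_p(Z))}.$$
   Context: The inner sum is over ordered $p$-tuples whose span has dimension exactly $d$ ($[v_1,\dots,v_p]$ is the $n\times p$ matrix with columns $v_i$). $H_p(Z)=\frac{1}{1-p}\log_q\sum_xP_Z(x)^p$. *)

theory Defs
  imports "HOL-Analysis.Analysis"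
begin

definition renyi_entropy :: "nat \<Rightarrow> ('a::{finite,field} ^ 'n \<Rightarrow> real) \<Rightarrow> real" where
  "renyi_entropy p P = (1 / (1 - real p)) * log (real CARD('a)) (\<Sum>x\<in>UNIV. P x ^ p)"

text \<open>g(d): ordered p-tuples (v_0..v_{p-1}) whose span has dimension exactly d
  (= rank of the n x p matrix with these columns).\<close>
definition gfun :: "nat \<Rightarrow> ('a::{finite,field} ^ 'n \<Rightarrow> real) \<Rightarrow> nat \<Rightarrow> real" where
  "gfun p P d = (1 / real CARD('a) ^ CARD('n)) *
     (\<Sum>x\<in>UNIV. \<Sum>v \<in> {v \<in> PiE {..<p} (\<lambda>_. UNIV). vec.dim (v ` {..<p}) = d}.
        \<Prod>l<p. P (x - v l))"

end

theory Submission
  imports Defs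
begin

lemma pow_powr_helper:
  fixes y :: real assumes "y \<ge> 0" "0 < k" "0 < m"
  shows "y ^ k = (y ^ m) powr (real k / real m)"
proof (cases "y = 0")
  case True thus ?thesis using assms by (simp add: zero_power)
next
  case False
  hence "y > 0" using assms by simp
  hence "(y ^ m) powr (real k / real m) = (y powr real m) powr (real k / real m)"
    by (simp add: powr_realpow)
  also have "\<dots> = y powr real k" using assms by (simp add: powr_powr)
  also have "\<dots> = y ^ k" using \<open>y>0\<close> by (simp add: powr_realpow)
  finally show ?thesis by simp
qed

lemma yng0:
  fixes a \<alpha> :: real assumes "a \<ge> 0" "0 \<le> \<alpha>" "\<alpha> \<le> 1"
  shows "a powr \<alpha> \<le> \<alpha> * a + (1 - \<alpha>)"
proof (cases "a = 0")
  case True thus ?thesis using assms by simp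
next
  case False
  thus ?thesis using Youngs_inequality_0[of \<alpha> "1-\<alpha>" a 1] assms by simp
qed

lemma pm:
  fixes w X :: "'b \<Rightarrow> real" and k m :: nat
  assumes S: "finite S" and w: "\<And>i. i \<in> S \<Longrightarrow> w i \<ge> 0" and X: "\<And>i. i \<in> S \<Longrightarrow> X i \<ge> 0"
    and ws: "(\<Sum>i\<in>S. w i) = 1" and k: "0 < k" "k \<le> m"
  shows "(\<Sum>i\<in>S. w i * X i ^ k) \<le> (\<Sum>i\<in>S. w i * X i ^ m) powr (real k / real m)"
proof -
  define A where "A = (\<Sum>i\<in>S. w i * X i ^ m)"
  define \<alpha> where "\<alpha> = real k / real m"
  have m: "0 < m" using k by simp
  have A0: "A \<ge> 0" unfolding A_def using w X by (intro sum_nonneg) auto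
  have al: "0 \<le> \<alpha>" "\<alpha> \<le> 1" using k unfolding \<alpha>_def by auto
  show ?thesis
  proof (cases "A = 0")
    case True
    have "\<forall>i\<in>S. w i * X i ^ m = 0"
      using True S w X unfolding A_def by (subst sum_nonneg_eq_0_iff[symmetric]) auto
    hence "\<forall>i\<in>S. w i * X i ^ k = 0" using k by (auto simp: zero_power)
    hence "(\<Sum>i\<in>S. w i * X i ^ k) = 0" by (intro sum.neutral) blast
    thus ?thesis using True by (simp add: A_def[symmetric])
  next
    case False
    hence Apos: "A > 0" using A0 by simp
    have pt: "w i * X i ^ k \<le> A powr \<alpha> * (\<alpha> / A * (w i * X i ^ m) + (1 - \<alpha>) * w i)" if i: "i \<in> S" for i
    proof -
      have "X i ^ k = (X i ^ m) powr \<alpha>" unfolding \<alpha>_def using pow_powr_helper[OF X[OF i] k(1) m] .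
      also have "\<dots> = (A * (X i ^ m / A)) powr \<alpha>" using Apos by simp
      also have "\<dots> = A powr \<alpha> * (X i ^ m / A) powr \<alpha>"
        using Apos X[OF i] by (subst powr_mult) auto
      also have "\<dots> \<le> A powr \<alpha> * (\<alpha> * (X i ^ m / A) + (1 - \<alpha>))"
        using yng0[of "X i ^ m / A" \<alpha>] al Apos X[OF i] by (intro mult_left_mono) auto
      finally have "w i * X i ^ k \<le> w i * (A powr \<alpha> * (\<alpha> * (X i ^ m / A) + (1 - \<alpha>)))"
        using w[OF i] by (intro mult_left_mono) auto
      thus ?thesis by (simp add: algebra_simps)
    qed
    have "(\<Sum>i\<in>S. w i * X i ^ k) \<le> (\<Sum>i\<in>S. A powr \<alpha> * (\<alpha> / A * (w i * X i ^ m) + (1 - \<alpha>) * w i))"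
      by (intro sum_mono pt)
    also have "\<dots> = A powr \<alpha> * (\<alpha> / A * A + (1 - \<alpha>) * 1)"
      by (simp only: sum_distrib_left[symmetric] sum.distrib A_def[symmetric] ws flip: sum_distrib_left)
    also have "\<dots> = A powr \<alpha>" using Apos by simp
    finally show ?thesis unfolding A_def \<alpha>_def .
  qed
qed

lemma amgm:
  fixes a :: "'b \<Rightarrow> real"
  assumes "finite R" "R \<noteq> {}" "\<And>i. i \<in> R \<Longrightarrow> a i \<ge> 0"
  shows "(\<Prod>i\<in>R. a i) \<le> (\<Sum>i\<in>R. a i ^ card R) / real (card R)"
proof -
  have c: "card R > 0" using assms by (simp add: card_gt_0_iff)
  have "(\<Prod>i\<in>R. a i ^ card R) powr (1 / card R) \<le> (\<Sum>i\<in>R. a i ^ card R / card R)"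
    using arith_geom_mean[of R "\<lambda>i. a i ^ card R"] assms by simp
  moreover have "(\<Prod>i\<in>R. a i ^ card R) = (\<Prod>i\<in>R. a i) ^ card R" by (simp add: prod_power_distrib)
  moreover have "((\<Prod>i\<in>R. a i) ^ card R) powr (1 / card R) = (\<Prod>i\<in>R. a i)"
    using pow_powr_helper[of "\<Prod>i\<in>R. a i" 1 "card R"] c assms(3) by (simp add: prod_nonneg)
  ultimately show ?thesis by (simp add: sum_divide_distrib)
qed

lemma young_nat:
  fixes a b :: real and k :: nat
  assumes "a \<ge> 0" "b \<ge> 0"
  shows "a * b ^ k \<le> a ^ (k+1) / real (k+1) + real k / real (k+1) * b ^ (k+1)"
proof (cases "a = 0 \<or> b = 0 \<or> k = 0")
  case True
  thus ?thesis using assms by (cases k) (auto simp: zero_le_mult_iff)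
next
  case False
  hence ab: "a > 0" "b > 0" "k > 0" using assms by auto
  have "(a ^ (k+1)) powr (1 / real (k+1)) * (b ^ (k+1)) powr (real k / real (k+1))
        \<le> (1 / real (k+1)) * a ^ (k+1) + (real k / real (k+1)) * b ^ (k+1)"
    using ab by (intro Youngs_inequality_0) (auto simp: field_simps)
  moreover have "(a ^ (k+1)) powr (1 / real (k+1)) = a"
    using pow_powr_helper[of a 1 "k+1"] ab by simp
  moreover have "(b ^ (k+1)) powr (real k / real (k+1)) = b ^ k"
    using pow_powr_helper[of b k "k+1"] ab by simp
  ultimately show ?thesis by simp
qed

lemma sum_affine_reindex:
  fixes f :: "'a::{finite,field} ^ 'n \<Rightarrow> real" and c :: 'a
  assumes "c \<noteq> 0"
  shows "(\<Sum>y\<in>UNIV. f (c *s y + b)) = (\<Sum>y\<in>UNIV. f y)"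
proof (rule sum.reindex_bij_witness[of _ "\<lambda>z. inverse c *s (z - b)" "\<lambda>y. c *s y + b"])
  fix z :: "'a^'n"
  show "inverse c *s (c *s z + b - b) = z" using assms by (simp add: vector_smult_assoc)
  show "c *s (inverse c *s (z - b)) + b = z" using assms by (simp add: vector_smult_assoc)
qed auto

lemma Mpos:
  fixes P :: "'a::{finite,field} ^ 'n \<Rightarrow> real"
  assumes P0: "\<And>x. P x \<ge> 0" and P1: "(\<Sum>x\<in>UNIV. P x) = 1"
  shows "0 < (\<Sum>x\<in>UNIV. P x ^ r)"
proof -
  obtain x0 where "P x0 \<noteq> 0" using P1 by (metis sum.neutral zero_neq_one)
  hence "P x0 > 0" using P0[of x0] by simp
  thus ?thesis using P0 by (intro sum_pos2[of UNIV x0]) auto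
qed

lemma m1:
  fixes P :: "'a::{finite,field} ^ 'n \<Rightarrow> real"
  assumes P0: "\<And>x. P x \<ge> 0" and P1: "(\<Sum>x\<in>UNIV. P x) = 1" and kp: "k + 1 \<le> p"
  shows "(\<Sum>x\<in>UNIV. P x ^ (k+1)) \<le> (\<Sum>x\<in>UNIV. P x ^ p) powr (real k / real (p - 1))"
proof (cases "k = 0")
  case True
  thus ?thesis using P1 Mpos[OF P0 P1, of p] by simp
next
  case False
  have "(\<Sum>x\<in>UNIV. P x * P x ^ k) \<le> (\<Sum>x\<in>UNIV. P x * P x ^ (p-1)) powr (real k / real (p - 1))"
    using False kp P0 P1 by (intro pm) auto
  moreover have "P x * P x ^ (p-1) = P x ^ p" for x using kp
    by (cases p) auto
  ultimately show ?thesis by simp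
qed

lemma m3:
  fixes P :: "'a::{finite,field} ^ 'n \<Rightarrow> real"
  assumes P0: "\<And>x. P x \<ge> 0" and P1: "(\<Sum>x\<in>UNIV. P x) = 1" and kp: "k \<le> p" and p2: "p \<ge> 2"
  shows "(\<Sum>x\<in>UNIV. P x ^ k) \<le> real CARD('a) ^ CARD('n) * (\<Sum>x\<in>UNIV. P x ^ p) powr (real k / real (p - 1))"
proof (cases k)
  case 0
  thus ?thesis using Mpos[OF P0 P1, of p] by simp
next
  case (Suc j)
  define Mp where "Mp = (\<Sum>x\<in>UNIV. P x ^ p)"
  have Mp: "Mp > 0" unfolding Mp_def by (rule Mpos[OF P0 P1])
  define N where "N = real CARD('a) ^ CARD('n)"
  have Nc: "N = real (card (UNIV :: ('a^'n) set))" unfolding N_def by simp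
  have "(\<Sum>x\<in>UNIV. P x * 1)\<^sup>2 \<le> (\<Sum>x\<in>UNIV. (P x)\<^sup>2) * (\<Sum>x\<in>(UNIV :: ('a^'n) set). 1\<^sup>2)"
    by (rule Cauchy_Schwarz_ineq_sum)
  hence "1 \<le> (\<Sum>x\<in>UNIV. P x ^ (1+1)) * N" using P1 unfolding Nc by (simp add: power2_eq_square)
  also have "(\<Sum>x\<in>UNIV. P x ^ (1+1)) \<le> Mp powr (1 / real (p - 1))"
    unfolding Mp_def using m1[OF P0 P1, of 1 p] p2 by simp
  finally have h1: "1 \<le> Mp powr (1 / real (p - 1)) * N" using Nc by (simp add: mult_right_mono)
  have h2: "(\<Sum>x\<in>UNIV. P x ^ (j+1)) \<le> Mp powr (real j / real (p - 1))"
    unfolding Mp_def using m1[OF P0 P1, of j p] kp Suc by simp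
  have "(\<Sum>x\<in>UNIV. P x ^ k) \<le> (\<Sum>x\<in>UNIV. P x ^ k) * (Mp powr (1 / real (p - 1)) * N)"
    using h1 Mpos[OF P0 P1, of k] by simp
  also have "\<dots> \<le> Mp powr (real j / real (p - 1)) * (Mp powr (1 / real (p - 1)) * N)"
    using h2 Suc Mp unfolding N_def by (intro mult_right_mono) auto
  also have "\<dots> = N * Mp powr (real k / real (p - 1))"
    using Suc by (simp add: powr_add[symmetric] add_divide_distrib add.commute)
  finally show ?thesis unfolding N_def Mp_def .
qed

lemma aux_avg: "(S::real) / real (k+1) + real k / real (k+1) * S = S"
proof -
  have g: "S/(1+t) + t/(1+t)*S = S" if h: "(1 + t::real) > 0" for t
  proof -
    have "S/(1+t) + t/(1+t)*S = (S + t*S)/(1+t)" by (simp add: add_divide_distrib)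
    also have "S + t*S = (1+t)*S" by (simp add: algebra_simps)
    finally show ?thesis using h by simp
  qed
  show ?thesis using g[of "real k"] by simp
qed

lemma young_sum:
  fixes P :: "'a::{finite,field} ^ 'n \<Rightarrow> real"
  assumes P0: "\<And>x. P x \<ge> 0" and c: "c \<noteq> 0"
  shows "(\<Sum>y\<in>UNIV. P y * P (c *s y + b) ^ k) \<le> (\<Sum>x\<in>UNIV. P x ^ (k+1))"
proof -
  have "(\<Sum>y\<in>UNIV. P y * P (c *s y + b) ^ k) \<le>
        (\<Sum>y\<in>UNIV. P y ^ (k+1) / real (k+1) + real k / real (k+1) * P (c *s y + b) ^ (k+1))"
    using P0 by (intro sum_mono young_nat) auto
  also have "\<dots> = (\<Sum>y\<in>UNIV. P y ^ (k+1)) / real (k+1) + real k / real (k+1) * (\<Sum>y\<in>UNIV. P (c *s y + b) ^ (k+1))"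
    by (simp add: sum.distrib sum_divide_distrib sum_distrib_left)
  also have "(\<Sum>y\<in>UNIV. P (c *s y + b) ^ (k+1)) = (\<Sum>y\<in>UNIV. P y ^ (k+1))"
    using sum_affine_reindex[OF c, of "\<lambda>z. P z ^ (k+1)" b] by simp
  also have "(\<Sum>y\<in>UNIV. P y ^ (k+1)) / real (k+1) + real k / real (k+1) * (\<Sum>y\<in>UNIV. P y ^ (k+1))
      = (\<Sum>y\<in>UNIV. P y ^ (k+1))" by (rule aux_avg)
  finally show ?thesis .
qed

lemma prob_one:
  fixes P :: "'a::{finite,field} ^ 'n \<Rightarrow> real"
  assumes P1: "(\<Sum>x\<in>UNIV. P x) = 1" and D: "finite D"
  shows "(\<Sum>u\<in>PiE D (\<lambda>_. UNIV). \<Prod>j\<in>D. P (u j)) = 1"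
  using prod_sum_PiE[OF D, of "\<lambda>_. UNIV" "\<lambda>_ y. P y"] P1 by simp

lemma sum_PiE_insert:
  fixes F :: "(nat \<Rightarrow> 'b) \<Rightarrow> real"
  assumes "j0 \<notin> D"
  shows "(\<Sum>u\<in>PiE (insert j0 D) (\<lambda>_. UNIV). F u) = (\<Sum>y\<in>UNIV. \<Sum>g\<in>PiE D (\<lambda>_. UNIV). F (g(j0 := y)))"
proof -
  have "(\<Sum>u\<in>PiE (insert j0 D) (\<lambda>_. UNIV). F u) = (\<Sum>(y,g)\<in>UNIV \<times> PiE D (\<lambda>_. UNIV). F (g(j0 := y)))"
    using assms
    by (intro sum.reindex_bij_witness[of _ "\<lambda>(y,g). g(j0 := y)" "\<lambda>g. (g j0, g(j0 := undefined))"])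
       (auto simp: PiE_def extensional_def)
  also have "\<dots> = (\<Sum>y\<in>UNIV. \<Sum>g\<in>PiE D (\<lambda>_. UNIV). F (g(j0 := y)))"
    by (subst sum.cartesian_product) auto
  finally show ?thesis .
qed

lemma split_lemma:
  fixes P :: "'a::{finite,field} ^ 'n \<Rightarrow> real" and e :: "nat \<Rightarrow> 'a"
  assumes P0: "\<And>x. P x \<ge> 0" and P1: "(\<Sum>x\<in>UNIV. P x) = 1"
    and D: "finite D" and j0: "j0 \<in> D" and e0: "e j0 \<noteq> 0"
  shows "(\<Sum>u\<in>PiE D (\<lambda>_. UNIV). (\<Prod>j\<in>D. P (u j)) * P (\<Sum>j\<in>D. e j *s u j) ^ k)
         \<le> (\<Sum>x\<in>UNIV. P x ^ (k+1))"
proof -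
  define D' where "D' = D - {j0}"
  have DD: "D = insert j0 D'" "j0 \<notin> D'" "finite D'" using j0 D unfolding D'_def by auto
  define M where "M = (\<Sum>x\<in>UNIV. P x ^ (k+1))"
  have eq: "(\<Prod>j\<in>D. P ((g(j0 := y)) j)) * P (\<Sum>j\<in>D. e j *s (g(j0 := y)) j) ^ k
      = (\<Prod>j\<in>D'. P (g j)) * (P y * P (e j0 *s y + (\<Sum>j\<in>D'. e j *s g j)) ^ k)" for g y
  proof -
    have a: "(\<Prod>j\<in>D'. P ((g(j0 := y)) j)) = (\<Prod>j\<in>D'. P (g j))"
      using DD by (intro prod.cong) auto
    have b: "(\<Sum>j\<in>D'. e j *s (g(j0 := y)) j) = (\<Sum>j\<in>D'. e j *s g j)"
      using DD by (intro sum.cong) auto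
    show ?thesis unfolding DD(1) using DD a b by (simp add: prod.insert sum.insert)
  qed
  have "(\<Sum>u\<in>PiE D (\<lambda>_. UNIV). (\<Prod>j\<in>D. P (u j)) * P (\<Sum>j\<in>D. e j *s u j) ^ k)
      = (\<Sum>y\<in>UNIV. \<Sum>g\<in>PiE D' (\<lambda>_. UNIV). (\<Prod>j\<in>D'. P (g j)) * (P y * P (e j0 *s y + (\<Sum>j\<in>D'. e j *s g j)) ^ k))"
    unfolding eq[symmetric] by (subst (1) DD(1), rule sum_PiE_insert[OF DD(2)])
  also have "\<dots> = (\<Sum>g\<in>PiE D' (\<lambda>_. UNIV). (\<Prod>j\<in>D'. P (g j)) * (\<Sum>y\<in>UNIV. P y * P (e j0 *s y + (\<Sum>j\<in>D'. e j *s g j)) ^ k))"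
    by (subst sum.swap) (simp add: sum_distrib_left)
  also have "\<dots> \<le> (\<Sum>g\<in>PiE D' (\<lambda>_. UNIV). (\<Prod>j\<in>D'. P (g j)) * M)"
    unfolding M_def
  proof (rule sum_mono)
    fix g
    show "(\<Prod>j\<in>D'. P (g j)) * (\<Sum>y\<in>UNIV. P y * P (e j0 *s y + (\<Sum>j\<in>D'. e j *s g j)) ^ k) \<le> (\<Prod>j\<in>D'. P (g j)) * (\<Sum>x\<in>UNIV. P x ^ (k+1))"
      by (rule mult_left_mono[OF young_sum[OF P0 e0]]) (use P0 in \<open>auto intro: prod_nonneg\<close>)
  qed
  also have "\<dots> = M" using prob_one[OF P1 DD(3)] by (simp add: sum_distrib_right[symmetric])
  finally show ?thesis unfolding M_def .
qed

lemma core: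
  fixes P :: "'a::{finite,field} ^ 'n \<Rightarrow> real" and e :: "nat \<Rightarrow> 'a"
  assumes P0: "\<And>x. P x \<ge> 0" and P1: "(\<Sum>x\<in>UNIV. P x) = 1" and p2: "p \<ge> 2"
    and D: "finite D" and kp: "k \<le> p" and kD: "D \<noteq> {} \<Longrightarrow> k + 1 \<le> p"
  shows "(\<Sum>x\<in>UNIV. \<Sum>w\<in>PiE D (\<lambda>_. UNIV). (\<Prod>j\<in>D. P (x - w j)) * P (x - (\<Sum>j\<in>D. e j *s w j)) ^ k)
     \<le> real CARD('a) ^ CARD('n) * (\<Sum>x\<in>UNIV. P x ^ p) powr (real k / real (p - 1))"
proof -
  define s where "s = (\<Sum>j\<in>D. e j)"
  define A where "A u = (\<Prod>j\<in>D. P (u j))" for u :: "nat \<Rightarrow> 'a^'n"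
  define b where "b u = (\<Sum>j\<in>D. e j *s u j)" for u :: "nat \<Rightarrow> 'a^'n"
  define N where "N = real CARD('a) ^ CARD('n)"
  define Mp where "Mp = (\<Sum>x\<in>UNIV. P x ^ p)"
  have A0: "A u \<ge> 0" for u unfolding A_def using P0 by (intro prod_nonneg) auto
  have step1: "(\<Sum>w\<in>PiE D (\<lambda>_. UNIV). (\<Prod>j\<in>D. P (x - w j)) * P (x - (\<Sum>j\<in>D. e j *s w j)) ^ k)
     = (\<Sum>u\<in>PiE D (\<lambda>_. UNIV). A u * P ((1 - s) *s x + b u) ^ k)" for x
  proof (rule sum.reindex_bij_witness[of _ "\<lambda>u. restrict (\<lambda>j. x - u j) D" "\<lambda>u. restrict (\<lambda>j. x - u j) D"])
    fix u :: "nat \<Rightarrow> 'a^'n" assume u: "u \<in> PiE D (\<lambda>_. UNIV)"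
    show "restrict (\<lambda>j. x - restrict (\<lambda>j. x - u j) D j) D = u"
      using u by (auto simp: PiE_def extensional_def fun_eq_iff)
    show "restrict (\<lambda>j. x - u j) D \<in> PiE D (\<lambda>_. UNIV)" by auto
    have pa: "A (restrict (\<lambda>j. x - u j) D) = (\<Prod>j\<in>D. P (x - u j))"
      unfolding A_def by (intro prod.cong) auto
    have "b (restrict (\<lambda>j. x - u j) D) = (\<Sum>j\<in>D. e j *s x - e j *s u j)"
      unfolding b_def by (intro sum.cong) (auto simp: vector_ssub_ldistrib)
    also have "\<dots> = s *s x - (\<Sum>j\<in>D. e j *s u j)"
      unfolding s_def by (simp add: sum_subtractf vec.scale_sum_left)
    finally have "(1 - s) *s x + b (restrict (\<lambda>j. x - u j) D) = x - (\<Sum>j\<in>D. e j *s u j)"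
      by (simp add: vec.scale_left_diff_distrib)
    thus "A (restrict (\<lambda>j. x - u j) D) * P ((1 - s) *s x + b (restrict (\<lambda>j. x - u j) D)) ^ k
        = (\<Prod>j\<in>D. P (x - u j)) * P (x - (\<Sum>j\<in>D. e j *s u j)) ^ k"
      by (simp only: pa)
  qed (auto simp: PiE_def extensional_def fun_eq_iff)
  have "(\<Sum>x\<in>UNIV. \<Sum>w\<in>PiE D (\<lambda>_. UNIV). (\<Prod>j\<in>D. P (x - w j)) * P (x - (\<Sum>j\<in>D. e j *s w j)) ^ k)
      = (\<Sum>u\<in>PiE D (\<lambda>_. UNIV). A u * (\<Sum>x\<in>UNIV. P ((1 - s) *s x + b u) ^ k))"
    unfolding step1 by (subst sum.swap) (simp add: sum_distrib_left)
  also have "\<dots> \<le> N * Mp powr (real k / real (p - 1))"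
  proof (cases "s = 1")
    case False
    hence "(\<Sum>x\<in>UNIV. P ((1 - s) *s x + b u) ^ k) = (\<Sum>x\<in>UNIV. P x ^ k)" for u
      using sum_affine_reindex[of "1 - s" "\<lambda>z. P z ^ k" "b u"] by simp
    hence "(\<Sum>u\<in>PiE D (\<lambda>_. UNIV). A u * (\<Sum>x\<in>UNIV. P ((1 - s) *s x + b u) ^ k))
        = (\<Sum>u\<in>PiE D (\<lambda>_. UNIV). A u) * (\<Sum>x\<in>UNIV. P x ^ k)"
      by (simp add: sum_distrib_right)
    also have "\<dots> = (\<Sum>x\<in>UNIV. P x ^ k)" using prob_one[OF P1 D] unfolding A_def by simp
    also have "\<dots> \<le> N * Mp powr (real k / real (p - 1))"
      unfolding N_def Mp_def by (rule m3[OF P0 P1 kp p2])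
    finally show ?thesis .
  next
    case True
    hence "D \<noteq> {}" unfolding s_def by auto
    have "\<exists>j0\<in>D. e j0 \<noteq> 0"
    proof (rule ccontr)
      assume "\<not> ?thesis" hence "s = 0" unfolding s_def by simp
      with True show False by simp
    qed
    then obtain j0 where j0: "j0 \<in> D" "e j0 \<noteq> 0" by blast
    have "(\<Sum>x\<in>UNIV. P ((1 - s) *s x + b u) ^ k) = N * P (b u) ^ k" for u
      using True unfolding N_def by simp
    hence "(\<Sum>u\<in>PiE D (\<lambda>_. UNIV). A u * (\<Sum>x\<in>UNIV. P ((1 - s) *s x + b u) ^ k))
        = N * (\<Sum>u\<in>PiE D (\<lambda>_. UNIV). A u * P (b u) ^ k)"
      by (simp add: sum_distrib_left algebra_simps)
    also have "\<dots> \<le> N * (\<Sum>x\<in>UNIV. P x ^ (k+1))"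
      unfolding A_def b_def N_def by (intro mult_left_mono split_lemma[where e=e, OF P0 P1 D j0]) auto
    also have "\<dots> \<le> N * Mp powr (real k / real (p - 1))"
      unfolding Mp_def N_def using kD[OF \<open>D \<noteq> {}\<close>] by (intro mult_left_mono m1[OF P0 P1]) auto
    finally show ?thesis .
  qed
  finally show ?thesis unfolding N_def Mp_def .
qed

lemma cover:
  fixes v :: "nat \<Rightarrow> 'a::{finite,field} ^ 'n"
  assumes v: "v \<in> PiE {..<p} (\<lambda>_. UNIV)" and d: "vec.dim (v ` {..<p}) = d"
  shows "\<exists>D. D \<subseteq> {..<p} \<and> card D = d \<and>
     (\<exists>c\<in>PiE ({..<p} - D) (\<lambda>_. PiE D (\<lambda>_. UNIV :: 'a set)).
        v \<in> {v \<in> PiE {..<p} (\<lambda>_. UNIV). \<forall>l\<in>{..<p} - D. v l = (\<Sum>j\<in>D. c l j *s v j)})"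
proof -
  obtain B where B: "B \<subseteq> v ` {..<p}" "vec.independent B" "v ` {..<p} \<subseteq> vec.span B" "card B = d"
    using vec.basis_exists[of "v ` {..<p}"] d by metis
  define D where "D = inv_into {..<p} v ` B"
  have Dsub: "D \<subseteq> {..<p}" unfolding D_def using B(1) inv_into_into[of _ v "{..<p}"] by blast
  have vD: "v ` D = B" unfolding D_def using B(1)
    by (auto simp: image_image f_inv_into_f intro!: image_eqI)
  have injB: "inj_on (inv_into {..<p} v) B" using B(1) by (rule inj_on_inv_into)
  have cardD: "card D = d" unfolding D_def using card_image[OF injB] B(4) by simp
  have finD: "finite D" using Dsub finite_subset by blast
  have injv: "inj_on v D" using vD cardD B(4) finD by (simp add: eq_card_imp_inj_on)
  have finB: "finite B" using B(1) finite_subset by blast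
  have "\<forall>l\<in>{..<p} - D. \<exists>cl. v l = (\<Sum>j\<in>D. cl j *s v j)"
  proof
    fix l assume l: "l \<in> {..<p} - D"
    hence "v l \<in> vec.span B" using B(3) by auto
    then obtain u where u: "v l = (\<Sum>b\<in>B. u b *s b)" using vec.span_finite[OF finB] by auto
    also have "\<dots> = (\<Sum>j\<in>D. u (v j) *s v j)" unfolding vD[symmetric]
      by (rule sum.reindex[OF injv, unfolded comp_def])
    finally show "\<exists>cl. v l = (\<Sum>j\<in>D. cl j *s v j)" by (intro exI[of _ "\<lambda>j. u (v j)"])
  qed
  then obtain f where f: "\<forall>l\<in>{..<p} - D. v l = (\<Sum>j\<in>D. f l j *s v j)" by metis
  define c where "c = restrict (\<lambda>l. restrict (f l) D) ({..<p} - D)"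
  have c: "c \<in> PiE ({..<p} - D) (\<lambda>_. PiE D (\<lambda>_. UNIV :: 'a set))" unfolding c_def by auto
  have "\<forall>l\<in>{..<p} - D. v l = (\<Sum>j\<in>D. c l j *s v j)"
    using f unfolding c_def by auto
  thus ?thesis using Dsub cardD c v by blast
qed

lemma perDc:
  fixes P :: "'a::{finite,field} ^ 'n \<Rightarrow> real" and c :: "nat \<Rightarrow> nat \<Rightarrow> 'a"
  assumes P0: "\<And>x. P x \<ge> 0" and P1: "(\<Sum>x\<in>UNIV. P x) = 1" and p2: "p \<ge> 2"
    and Dsub: "D \<subseteq> {..<p}" and dp: "card D < p"
  shows "(\<Sum>x\<in>UNIV. \<Sum>v\<in>{v \<in> PiE {..<p} (\<lambda>_. UNIV). \<forall>l\<in>{..<p} - D. v l = (\<Sum>j\<in>D. c l j *s v j)}.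
            \<Prod>l<p. P (x - v l))
     \<le> real CARD('a) ^ CARD('n) * (\<Sum>x\<in>UNIV. P x ^ p) powr (real (p - card D) / real (p - 1))"
proof -
  define R where "R = {..<p} - D"
  define k where "k = p - card D"
  define N where "N = real CARD('a) ^ CARD('n)"
  define Mp where "Mp = (\<Sum>x\<in>UNIV. P x ^ p)"
  define Img where "Img = {v \<in> PiE {..<p} (\<lambda>_. UNIV :: ('a^'n) set). \<forall>l\<in>{..<p} - D. v l = (\<Sum>j\<in>D. c l j *s v j)}"
  define ext where "ext w = (\<lambda>l. if l \<in> D then w l else if l < p then (\<Sum>j\<in>D. c l j *s w j) else undefined)"
    for w :: "nat \<Rightarrow> 'a^'n"
  have finD: "finite D" using Dsub finite_subset by blast
  have cardR: "card R = k" unfolding R_def k_def using Dsub finD by (simp add: card_Diff_subset)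
  have k0: "k > 0" unfolding k_def using dp by simp
  have finR: "finite R" unfolding R_def by simp
  have Rne: "R \<noteq> {}" using cardR k0 by auto
  have kp: "k \<le> p" unfolding k_def by simp
  have kD: "D \<noteq> {} \<Longrightarrow> k + 1 \<le> p" unfolding k_def using finD dp card_gt_0_iff[of D] by simp
  have reidx: "(\<Sum>v\<in>Img. \<Prod>l<p. P (x - v l)) = (\<Sum>w\<in>PiE D (\<lambda>_. UNIV). \<Prod>l<p. P (x - ext w l))" for x
  proof (rule sum.reindex_bij_witness[of _ ext "\<lambda>v. restrict v D"])
    fix v assume v: "v \<in> Img"
    show "ext (restrict v D) = v"
    proof
      fix l show "ext (restrict v D) l = v l"
        using v Dsub unfolding ext_def Img_def by (auto simp: PiE_def extensional_def intro!: sum.cong)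
    qed
    show "restrict v D \<in> PiE D (\<lambda>_. UNIV)" by simp
    show "(\<Prod>l<p. P (x - ext (restrict v D) l)) = (\<Prod>l<p. P (x - v l))"
      using \<open>ext (restrict v D) = v\<close> by simp
  next
    fix w :: "nat \<Rightarrow> 'a^'n" assume w: "w \<in> PiE D (\<lambda>_. UNIV)"
    show "restrict (ext w) D = w" using w unfolding ext_def by (auto simp: PiE_def extensional_def fun_eq_iff)
    have "\<forall>l\<in>{..<p} - D. ext w l = (\<Sum>j\<in>D. c l j *s ext w j)"
      unfolding ext_def by (auto intro!: sum.cong)
    moreover have "ext w \<in> PiE {..<p} (\<lambda>_. UNIV)"
      using Dsub unfolding ext_def by (auto simp: PiE_def extensional_def)
    ultimately show "ext w \<in> Img" unfolding Img_def by blast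
  qed
  define a where "a x w l = P (x - (\<Sum>j\<in>D. c l j *s w j))" for x and w :: "nat \<Rightarrow> 'a^'n" and l
  have split: "(\<Prod>l<p. P (x - ext w l)) = (\<Prod>j\<in>D. P (x - w j)) * (\<Prod>l\<in>R. a x w l)" for x w
  proof -
    have "(\<Prod>l<p. P (x - ext w l)) = (\<Prod>l\<in>{..<p} - D. P (x - ext w l)) * (\<Prod>l\<in>D. P (x - ext w l))"
      using Dsub by (intro prod.subset_diff) auto
    also have "(\<Prod>l\<in>{..<p} - D. P (x - ext w l)) = (\<Prod>l\<in>R. a x w l)"
      unfolding R_def a_def ext_def by (intro prod.cong) auto
    also have "(\<Prod>l\<in>D. P (x - ext w l)) = (\<Prod>j\<in>D. P (x - w j))"
      unfolding ext_def by (intro prod.cong) auto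
    finally show ?thesis by simp
  qed
  have "(\<Sum>x\<in>UNIV. \<Sum>v\<in>Img. \<Prod>l<p. P (x - v l))
      = (\<Sum>x\<in>UNIV. \<Sum>w\<in>PiE D (\<lambda>_. UNIV). (\<Prod>j\<in>D. P (x - w j)) * (\<Prod>l\<in>R. a x w l))"
    by (simp add: reidx split)
  also have "\<dots> \<le> (\<Sum>x\<in>UNIV. \<Sum>w\<in>PiE D (\<lambda>_. UNIV). (\<Prod>j\<in>D. P (x - w j)) * ((\<Sum>l\<in>R. a x w l ^ k) / real k))"
  proof (intro sum_mono mult_left_mono)
    fix x w
    show "(\<Prod>l\<in>R. a x w l) \<le> (\<Sum>l\<in>R. a x w l ^ k) / real k"
      using amgm[OF finR Rne, of "a x w"] P0 cardR unfolding a_def by simp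
    show "0 \<le> (\<Prod>j\<in>D. P (x - w j))" using P0 by (intro prod_nonneg) auto
  qed
  also have "\<dots> = (\<Sum>x\<in>UNIV. \<Sum>w\<in>PiE D (\<lambda>_. UNIV). \<Sum>l\<in>R. (\<Prod>j\<in>D. P (x - w j)) * a x w l ^ k) / real k"
    by (simp only: sum_divide_distrib sum_distrib_left times_divide_eq_right)
  also have "(\<Sum>x\<in>UNIV. \<Sum>w\<in>PiE D (\<lambda>_. UNIV). \<Sum>l\<in>R. (\<Prod>j\<in>D. P (x - w j)) * a x w l ^ k) / real k
     = (\<Sum>x\<in>UNIV. \<Sum>l\<in>R. \<Sum>w\<in>PiE D (\<lambda>_. UNIV). (\<Prod>j\<in>D. P (x - w j)) * a x w l ^ k) / real k"
    by (intro arg_cong[where f="\<lambda>t. t / real k"] sum.cong refl sum.swap)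
  also have "\<dots> = (\<Sum>l\<in>R. \<Sum>x\<in>UNIV. \<Sum>w\<in>PiE D (\<lambda>_. UNIV). (\<Prod>j\<in>D. P (x - w j)) * a x w l ^ k) / real k"
    by (subst sum.swap) (rule refl)
  also have "\<dots> \<le> (\<Sum>l\<in>R. N * Mp powr (real k / real (p - 1))) / real k"
    unfolding a_def N_def Mp_def
    by (intro divide_right_mono sum_mono core[OF P0 P1 p2 finD kp kD]) auto
  also have "\<dots> = N * Mp powr (real k / real (p - 1))" using cardR k0 by simp
  finally show ?thesis unfolding Img_def N_def Mp_def k_def .
qed

lemma cardq: "CARD('a::{finite,field}) \<ge> 2"
proof -
  have "card {0::'a, 1} = 2" by simp
  moreover have "card {0::'a, 1} \<le> CARD('a)" by (rule card_mono) auto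
  ultimately show ?thesis by simp
qed

lemma sum_shift:
  fixes P :: "'a::{finite,field} ^ 'n \<Rightarrow> real"
  shows "(\<Sum>y\<in>UNIV. P (x - y)) = (\<Sum>y\<in>UNIV. P y)"
proof -
  have "(\<Sum>y\<in>UNIV. P ((-1) *s y + x)) = (\<Sum>y\<in>UNIV. P y)" by (rule sum_affine_reindex) simp
  moreover have "(-1) *s y + x = x - y" for y :: "'a^'n" by (simp add: vec_eq_iff)
  ultimately show ?thesis by simp
qed

lemma rhs_eq:
  fixes P :: "'a::{finite,field} ^ 'n \<Rightarrow> real"
  assumes P0: "\<And>x. P x \<ge> 0" and P1: "(\<Sum>x\<in>UNIV. P x) = 1" and p2: "p \<ge> 2" and dp: "d \<le> p"
  shows "real CARD('a) powr ((real p - real d) * (real d - renyi_entropy p P))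
       = real CARD('a) ^ (d * (p - d)) * (\<Sum>x\<in>UNIV. P x ^ p) powr (real (p - d) / real (p - 1))"
proof -
  define q where "q = real CARD('a)"
  define Mp where "Mp = (\<Sum>x\<in>UNIV. P x ^ p)"
  have q: "q > 1" unfolding q_def using cardq[where 'a='a] by simp
  have Mp: "Mp > 0" unfolding Mp_def by (rule Mpos[OF P0 P1])
  have H: "renyi_entropy p P = 1 / (1 - real p) * log q Mp" unfolding renyi_entropy_def q_def Mp_def by simp
  have p1: "real p - 1 \<noteq> 0" using p2 by simp
  have e: "(real p - real d) * (real d - renyi_entropy p P)
      = real (d * (p - d)) + real (p - d) / real (p - 1) * log q Mp"
    unfolding H using dp p2 p1 by (simp add: of_nat_diff field_simps)
  have "q powr ((real p - real d) * (real d - renyi_entropy p P))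
      = q powr real (d * (p - d)) * q powr (real (p - d) / real (p - 1) * log q Mp)"
    unfolding e by (rule powr_add)
  also have "q powr real (d * (p - d)) = q ^ (d * (p - d))" using q powr_realpow[of q "d * (p - d)"] by simp
  also have "q powr (real (p - d) / real (p - 1) * log q Mp) = (q powr log q Mp) powr (real (p - d) / real (p - 1))"
    by (simp add: powr_powr mult.commute)
  also have "q powr log q Mp = Mp" using q Mp by simp
  finally show ?thesis unfolding q_def Mp_def .
qed

theorem mainTheorem13:
  fixes P :: "'a::{finite,field} ^ 'n \<Rightarrow> real" and p d :: nat
  assumes "\<And>x. P x \<ge> 0" and "(\<Sum>x\<in>UNIV. P x) = 1"
    and "p \<ge> 2" and "d \<le> p"
  shows "gfun p P d \<le> real (p choose d) *
           real CARD('a) powr ((real p - real d) * (real d - renyi_entropy p P))"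
proof -
  note P0 = assms(1) and P1 = assms(2) and p2 = assms(3) and dp = assms(4)
  define N where "N = real CARD('a) ^ CARD('n)"
  define Mp where "Mp = (\<Sum>x\<in>UNIV. P x ^ p)"
  define T where "T = {v \<in> PiE {..<p} (\<lambda>_. UNIV :: ('a^'n) set). vec.dim (v ` {..<p}) = d}"
  define F where "F x v = (\<Prod>l<p. P (x - v l))" for x :: "'a^'n" and v
  have N0: "N > 0" unfolding N_def by simp
  have F0: "F x v \<ge> 0" for x v unfolding F_def using P0 by (intro prod_nonneg) auto
  have finPi: "finite (PiE {..<p} (\<lambda>_. UNIV :: ('a^'n) set))" by (simp add: finite_PiE)
  have g: "gfun p P d = (1 / N) * (\<Sum>x\<in>UNIV. \<Sum>v\<in>T. F x v)"
    unfolding gfun_def N_def T_def F_def by simp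
  have RHS: "real CARD('a) powr ((real p - real d) * (real d - renyi_entropy p P))
       = real CARD('a) ^ (d * (p - d)) * Mp powr (real (p - d) / real (p - 1))"
    unfolding Mp_def by (rule rhs_eq[OF P0 P1 p2 dp])
  show ?thesis
  proof (cases "d = p")
    case True
    have "(\<Sum>x\<in>UNIV. \<Sum>v\<in>T. F x v) \<le> (\<Sum>x\<in>UNIV. \<Sum>v\<in>PiE {..<p} (\<lambda>_. UNIV). F x v)"
      using finPi F0 unfolding T_def by (intro sum_mono sum_mono2) auto
    also have "\<dots> = (\<Sum>x\<in>UNIV. \<Prod>l<p. \<Sum>y\<in>UNIV. P (x - y))"
      unfolding F_def by (intro sum.cong refl prod_sum_PiE[symmetric]) auto
    also have "\<dots> = N" using P1 unfolding N_def by (simp add: sum_shift)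
    finally have "gfun p P d \<le> 1" unfolding g using N0 by (simp add: divide_simps)
    thus ?thesis using True RHS by simp
  next
    case False
    hence dlt: "d < p" using dp by simp
    define Ds where "Ds = {D. D \<subseteq> {..<p} \<and> card D = d}"
    define Cs where "Cs D = PiE ({..<p} - D) (\<lambda>_. PiE D (\<lambda>_. UNIV :: 'a set))" for D
    define Img where "Img D c = {v \<in> PiE {..<p} (\<lambda>_. UNIV :: ('a^'n) set). \<forall>l\<in>{..<p} - D. v l = (\<Sum>j\<in>D. c l j *s v j)}"
      for D c
    have finDs: "finite Ds" unfolding Ds_def by (rule finite_subset[of _ "Pow {..<p}"]) auto
    have finCs: "finite (Cs D)" if "D \<in> Ds" for D
      using that unfolding Cs_def Ds_def by (intro finite_PiE) (auto intro: finite_subset)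
    have finImg: "finite (Img D c)" for D c
      unfolding Img_def by (rule finite_subset[OF _ finPi]) auto
    have perx: "(\<Sum>v\<in>T. F x v) \<le> (\<Sum>D\<in>Ds. \<Sum>c\<in>Cs D. \<Sum>v\<in>Img D c. F x v)" for x
    proof -
      have "(\<Sum>v\<in>T. F x v) \<le> (\<Sum>v\<in>T. \<Sum>D\<in>Ds. \<Sum>c\<in>Cs D. if v \<in> Img D c then F x v else 0)"
      proof (rule sum_mono)
        fix v assume v: "v \<in> T"
        then obtain D c where D: "D \<in> Ds" and c: "c \<in> Cs D" and vI: "v \<in> Img D c"
          using cover[of v p d] unfolding T_def Ds_def Cs_def Img_def by blast
        have "F x v = (if v \<in> Img D c then F x v else 0)" using vI by simp
        also have "\<dots> \<le> (\<Sum>c\<in>Cs D. if v \<in> Img D c then F x v else 0)"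
          using c finCs[OF D] F0 by (intro member_le_sum) auto
        also have "\<dots> \<le> (\<Sum>D\<in>Ds. \<Sum>c\<in>Cs D. if v \<in> Img D c then F x v else 0)"
          using D finDs F0 by (intro member_le_sum[where f="\<lambda>D. \<Sum>c\<in>Cs D. if v \<in> Img D c then F x v else 0"] sum_nonneg) auto
        finally show "F x v \<le> (\<Sum>D\<in>Ds. \<Sum>c\<in>Cs D. if v \<in> Img D c then F x v else 0)" .
      qed
      also have "\<dots> = (\<Sum>D\<in>Ds. \<Sum>c\<in>Cs D. \<Sum>v\<in>T. if v \<in> Img D c then F x v else 0)"
        by (subst sum.swap) (intro sum.cong refl sum.swap)
      also have "\<dots> \<le> (\<Sum>D\<in>Ds. \<Sum>c\<in>Cs D. \<Sum>v\<in>Img D c. F x v)"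
      proof (intro sum_mono)
        fix D c
        have "(\<Sum>v\<in>T. if v \<in> Img D c then F x v else 0) = (\<Sum>v\<in>T \<inter> Img D c. F x v)"
          using finPi unfolding T_def by (simp add: sum.inter_restrict)
        also have "\<dots> \<le> (\<Sum>v\<in>Img D c. F x v)"
          using finImg F0 by (intro sum_mono2) auto
        finally show "(\<Sum>v\<in>T. if v \<in> Img D c then F x v else 0) \<le> (\<Sum>v\<in>Img D c. F x v)" .
      qed
      finally show ?thesis .
    qed
    have cardCs: "card (Cs D) = CARD('a) ^ (d * (p - d))" if "D \<in> Ds" for D
    proof -
      have D: "D \<subseteq> {..<p}" "card D = d" "finite D" using that unfolding Ds_def by (auto intro: finite_subset)
      have "card (Cs D) = (\<Prod>l\<in>{..<p} - D. card (PiE D (\<lambda>_. UNIV :: 'a set)))"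
        unfolding Cs_def by (rule card_PiE) simp
      also have "card (PiE D (\<lambda>_. UNIV :: 'a set)) = CARD('a) ^ d"
        using D by (simp add: card_PiE)
      also have "(\<Prod>l\<in>{..<p} - D. CARD('a) ^ d) = (CARD('a) ^ d) ^ card ({..<p} - D)" by simp
      also have "card ({..<p} - D) = p - d" using D by (simp add: card_Diff_subset)
      finally show ?thesis by (simp add: power_mult)
    qed
    have cardDs: "card Ds = p choose d" unfolding Ds_def using n_subsets[of "{..<p}" d] by simp
    have "(\<Sum>x\<in>UNIV. \<Sum>v\<in>T. F x v) \<le> (\<Sum>x\<in>UNIV. \<Sum>D\<in>Ds. \<Sum>c\<in>Cs D. \<Sum>v\<in>Img D c. F x v)"
      by (intro sum_mono perx)
    also have "\<dots> = (\<Sum>D\<in>Ds. \<Sum>c\<in>Cs D. \<Sum>x\<in>UNIV. \<Sum>v\<in>Img D c. F x v)"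
      by (subst sum.swap) (intro sum.cong refl sum.swap)
    also have "\<dots> \<le> (\<Sum>D\<in>Ds. \<Sum>c\<in>Cs D. N * Mp powr (real (p - d) / real (p - 1)))"
    proof (intro sum_mono)
      fix D c assume D: "D \<in> Ds"
      have Dsub: "D \<subseteq> {..<p}" and cD: "card D = d" using D unfolding Ds_def by auto
      show "(\<Sum>x\<in>UNIV. \<Sum>v\<in>Img D c. F x v) \<le> N * Mp powr (real (p - d) / real (p - 1))"
        using perDc[OF P0 P1 p2 Dsub, of c] cD dlt unfolding Img_def F_def N_def Mp_def by simp
    qed
    also have "\<dots> = real (p choose d) * real CARD('a) ^ (d * (p - d)) * (N * Mp powr (real (p - d) / real (p - 1)))"
      using cardCs cardDs by simp
    finally have "(1 / N) * (\<Sum>x\<in>UNIV. \<Sum>v\<in>T. F x v) \<le>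
       (1 / N) * (real (p choose d) * real CARD('a) ^ (d * (p - d)) * (N * Mp powr (real (p - d) / real (p - 1))))"
      using N0 by (intro mult_left_mono) auto
    also have "\<dots> = real (p choose d) * (real CARD('a) ^ (d * (p - d)) * Mp powr (real (p - d) / real (p - 1)))"
      using N0 by (simp add: field_simps)
    finally show ?thesis unfolding g RHS .
  qed
qed

end
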